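(* Let $G$ be a connected graph on $n\ge2$ vertices, $\alpha\in\mathbb{R}$, with vertices labeled so that, writing $s_k=({}^\alpha\mathbb{M})_k+\mathbb{D}_k$, we have $s_1\ge s_2\ge\cdots\ge s_n$. Let $M=\max_{1\le i\le n}\mathbb{D}_i$ and $N=\max_{1\le i\ne j\le n}d_{ij}\mathbb{D}_j^\alpha/\mathbb{D}_i^\alpha$. Then for $1\le i\le n$, \[\rho(\mathbb{DQ}(G))\le \frac{s_i+M-N+\sqrt{(s_i-M+N)^2+4N\sum_{k=1}^{i-1}(s_k-s_i)}}{2}.\] Equality holds if and only if $s_1=\cdots=s_n$, or for some $2\le t\le i$: (i) $\mathbb{D}_k=M$ for $1\le k\le t-1$; (ii) $d_{kl}\mathbb{D}_l^\alpha/\mathbb{D}_k^\alpha=N$ for all $1\le k\le n$, $1\le l\le t-1$, $k\ne l$; (iii) $s_t=\cdots=s_n$.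
   Context: $\mathbb{D}(G)=(d_{ij})$ is the distance matrix of $G$, $\mathbb{D}_i=\sum_j d_{ij}$ the transmission of $v_i$, and $\mathbb{DQ}(G)=\mathrm{diag}(\mathbb{D}_1,\dots,\mathbb{D}_n)+\mathbb{D}(G)$ the distance signless Laplacian matrix. $({}^\alpha\mathbb{M})_i=\frac{\sum_{j=1}^n d_{ij}\mathbb{D}_j^\alpha}{\mathbb{D}_i^\alpha}$ is the generalized average transmission. $\rho$ is the spectral radius. An empty sum equals $0$. *)

theory Defs
  imports Complex_Main "Jordan_Normal_Form.Spectral_Radius"
begin

definition is_walk :: "(nat \<Rightarrow> nat \<Rightarrow> bool) \<Rightarrow> nat \<Rightarrow> nat \<Rightarrow> nat \<Rightarrow> nat \<Rightarrow> bool" where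
  "is_walk E n u v k \<longleftrightarrow> (\<exists>p :: nat \<Rightarrow> nat. p 0 = u \<and> p k = v \<and> (\<forall>m\<le>k. p m < n)
       \<and> (\<forall>m<k. E (p m) (p (Suc m))))"

definition simple_graph :: "nat \<Rightarrow> (nat \<Rightarrow> nat \<Rightarrow> bool) \<Rightarrow> bool" where
  "simple_graph n E \<longleftrightarrow> (\<forall>u v. E u v \<longrightarrow> u < n \<and> v < n) \<and> (\<forall>u v. E u v \<longrightarrow> E v u)
       \<and> (\<forall>u. \<not> E u u)"

definition connected_graph :: "nat \<Rightarrow> (nat \<Rightarrow> nat \<Rightarrow> bool) \<Rightarrow> bool" where
  "connected_graph n E \<longleftrightarrow> simple_graph n E \<and> (\<forall>u<n. \<forall>v<n. \<exists>k. is_walk E n u v k)"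

definition gdist :: "nat \<Rightarrow> (nat \<Rightarrow> nat \<Rightarrow> bool) \<Rightarrow> nat \<Rightarrow> nat \<Rightarrow> real" where
  "gdist n E u v = real (LEAST k. is_walk E n u v k)"

definition transmission :: "nat \<Rightarrow> (nat \<Rightarrow> nat \<Rightarrow> bool) \<Rightarrow> nat \<Rightarrow> real" where
  "transmission n E i = (\<Sum>j<n. gdist n E i j)"

definition DQ_mat :: "nat \<Rightarrow> (nat \<Rightarrow> nat \<Rightarrow> bool) \<Rightarrow> complex mat" where
  "DQ_mat n E = mat n n (\<lambda>(i,j). complex_of_real
      ((if i = j then transmission n E i else 0) + gdist n E i j))"

definition gen_avg_trans :: "nat \<Rightarrow> (nat \<Rightarrow> nat \<Rightarrow> bool) \<Rightarrow> real \<Rightarrow> nat \<Rightarrow> real" where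
  "gen_avg_trans n E \<alpha> i =
     (\<Sum>j<n. gdist n E i j * transmission n E j powr \<alpha>) / transmission n E i powr \<alpha>"

end

theory Submission
  imports Defs
begin

lemma eigvec_comp:
  fixes A :: "nat \<Rightarrow> nat \<Rightarrow> real"
  assumes ev: "eigenvector (mat n n (\<lambda>(i,j). complex_of_real (A i j))) v \<mu>" and k: "k < n"
  shows "(\<Sum>l<n. complex_of_real (A k l) * v $ l) = \<mu> * v $ k"
proof -
  let ?Q = "mat n n (\<lambda>(i,j). complex_of_real (A i j))"
  from ev have v: "v \<in> carrier_vec n" and Av: "?Q *\<^sub>v v = \<mu> \<cdot>\<^sub>v v"
    unfolding eigenvector_def by auto
  have "(?Q *\<^sub>v v) $ k = (\<Sum>l<n. complex_of_real (A k l) * v $ l)"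
    using v k by (auto simp: mult_mat_vec_def scalar_prod_def lessThan_atLeast0 intro!: sum.cong)
  moreover have "(\<mu> \<cdot>\<^sub>v v) $ k = \<mu> * v $ k" using v k by auto
  ultimately show ?thesis using Av by simp
qed

lemma eig_bound:
  fixes A :: "nat \<Rightarrow> nat \<Rightarrow> real" and w :: "nat \<Rightarrow> real"
  assumes nn: "\<And>k l. k < n \<Longrightarrow> l < n \<Longrightarrow> A k l \<ge> 0"
    and pos: "\<And>k l. k < n \<Longrightarrow> l < n \<Longrightarrow> k \<noteq> l \<Longrightarrow> A k l > 0"
    and wpos: "\<And>k. k < n \<Longrightarrow> w k > 0"
    and row: "\<And>k. k < n \<Longrightarrow> (\<Sum>l<n. A k l * w l) \<le> c * w k"
    and ev: "eigenvalue (mat n n (\<lambda>(i,j). complex_of_real (A i j))) \<mu>"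
  shows "cmod \<mu> \<le> c \<and> (cmod \<mu> = c \<longrightarrow> (\<forall>k<n. (\<Sum>l<n. A k l * w l) = c * w k))"
proof -
  let ?Q = "mat n n (\<lambda>(i,j). complex_of_real (A i j))"
  from ev obtain v where evv: "eigenvector ?Q v \<mu>" unfolding eigenvalue_def by auto
  hence v: "v \<in> carrier_vec n" and v0: "v \<noteq> 0\<^sub>v n" unfolding eigenvector_def by auto
  define y where "y l = cmod (v $ l) / w l" for l
  define m where "m = Max (y ` {..<n})"
  from v0 v obtain l0 where l0: "l0 < n" "v $ l0 \<noteq> 0" by (metis eq_vecI carrier_vecD index_zero_vec(1,2))
  have fin: "finite (y ` {..<n})" by simp
  have ne: "y ` {..<n} \<noteq> {}" using l0 by auto
  have yle: "y l \<le> m" if "l < n" for l unfolding m_def using that fin by auto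
  have "y l0 > 0" unfolding y_def using l0 wpos by auto
  hence mpos: "m > 0" using yle[OF l0(1)] by linarith
  obtain k0 where k0: "k0 < n" "y k0 = m"
    using Max_in[OF fin ne] unfolding m_def by auto
  have key: "cmod \<mu> * m * w k \<le> (\<Sum>l<n. A k l * w l * y l)
       \<and> (\<Sum>l<n. A k l * w l * y l) \<le> m * (\<Sum>l<n. A k l * w l)"
    if k: "k < n" "y k = m" for k
  proof
    have vk: "cmod (v $ k) = m * w k" using k wpos[OF k(1)] unfolding y_def by auto
    have "cmod \<mu> * m * w k = cmod (\<mu> * v $ k)" using vk by (simp add: norm_mult)
    also have "\<dots> = cmod (\<Sum>l<n. complex_of_real (A k l) * v $ l)"
      using eigvec_comp[OF evv k(1)] by simp
    also have "\<dots> \<le> (\<Sum>l<n. cmod (complex_of_real (A k l) * v $ l))" by (rule norm_sum)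
    also have "\<dots> = (\<Sum>l<n. A k l * w l * y l)"
    proof (rule sum.cong)
      fix l assume "l \<in> {..<n}"
      hence l: "l < n" by auto
      show "cmod (complex_of_real (A k l) * v $ l) = A k l * w l * y l"
        using nn[OF k(1) l] wpos[OF l] unfolding y_def by (simp add: norm_mult)
    qed simp
    finally show "cmod \<mu> * m * w k \<le> (\<Sum>l<n. A k l * w l * y l)" .
    have "(\<Sum>l<n. A k l * w l * y l) \<le> (\<Sum>l<n. A k l * w l * m)"
      by (rule sum_mono) (use nn[OF k(1)] wpos yle in \<open>auto intro!: mult_left_mono simp: less_imp_le\<close>)
    also have "\<dots> = m * (\<Sum>l<n. A k l * w l)" by (simp add: sum_distrib_left mult.commute)
    finally show "(\<Sum>l<n. A k l * w l * y l) \<le> m * (\<Sum>l<n. A k l * w l)" .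
  qed
  have le: "cmod \<mu> \<le> c"
  proof -
    from key[OF k0] row[OF k0(1)] mpos have "cmod \<mu> * m * w k0 \<le> m * (c * w k0)"
      by (meson mult_left_mono less_imp_le order_trans)
    hence "(cmod \<mu> * m * w k0) \<le> (c * m * w k0)" by (simp add: algebra_simps)
    thus ?thesis using mpos wpos[OF k0(1)] by simp
  qed
  moreover have "\<forall>k<n. (\<Sum>l<n. A k l * w l) = c * w k" if eq: "cmod \<mu> = c"
  proof -
    have allmax: "y l = m" if l: "l < n" for l
    proof (cases "l = k0")
      case True thus ?thesis using k0 by simp
    next
      case False
      have h1: "c * m * w k0 \<le> (\<Sum>l<n. A k0 l * w l * y l)"
        and h2: "(\<Sum>l<n. A k0 l * w l * y l) \<le> m * (\<Sum>l<n. A k0 l * w l)"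
        using key[OF k0] unfolding eq by auto
      have h3: "m * (\<Sum>l<n. A k0 l * w l) \<le> m * (c * w k0)" using row[OF k0(1)] mpos by simp
      have h4: "m * (c * w k0) = c * m * w k0" by simp
      have "(\<Sum>l<n. A k0 l * w l * y l) = m * (\<Sum>l<n. A k0 l * w l)"
        using h1 h2 h3 h4 by linarith
      also have "\<dots> = (\<Sum>l<n. A k0 l * w l * m)" by (simp add: sum_distrib_left mult.commute)
      finally have "(\<Sum>l<n. A k0 l * w l * y l) = (\<Sum>l<n. A k0 l * w l * m)" .
      hence "(\<Sum>l<n. A k0 l * w l * m - A k0 l * w l * y l) = 0"
        by (simp add: sum_subtractf)
      moreover have "\<forall>j\<in>{..<n}. A k0 j * w j * m - A k0 j * w j * y j \<ge> 0"
      proof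
        fix j assume "j \<in> {..<n}"
        hence j: "j < n" by auto
        have "A k0 j * w j * y j \<le> A k0 j * w j * m"
          using nn[OF k0(1) j] wpos[OF j] yle[OF j] by (simp add: mult_left_mono)
        thus "A k0 j * w j * m - A k0 j * w j * y j \<ge> 0" by simp
      qed
      ultimately have "A k0 l * w l * m - A k0 l * w l * y l = 0"
        using sum_nonneg_eq_0_iff[of "{..<n}" "\<lambda>j. A k0 j * w j * m - A k0 j * w j * y j"] l by auto
      hence "(A k0 l * w l) * (m - y l) = 0" by (simp add: algebra_simps)
      moreover have "A k0 l * w l > 0" using pos[OF k0(1) l] False wpos[OF l] by auto
      ultimately show ?thesis by (metis mult_eq_0_iff less_irrefl eq_iff_diff_eq_0)
    qed
    show ?thesis
    proof (intro allI impI)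
      fix k assume k: "k < n"
      have "c * m * w k \<le> m * (\<Sum>l<n. A k l * w l)" using key[OF k allmax[OF k]] unfolding eq by linarith
      hence "m * (c * w k) \<le> m * (\<Sum>l<n. A k l * w l)" by (simp add: algebra_simps)
      hence "c * w k \<le> (\<Sum>l<n. A k l * w l)" using mpos by simp
      thus "(\<Sum>l<n. A k l * w l) = c * w k" using row[OF k] by linarith
    qed
  qed
  ultimately show ?thesis by blast
qed

lemma eig_exact:
  fixes A :: "nat \<Rightarrow> nat \<Rightarrow> real" and w :: "nat \<Rightarrow> real"
  assumes n: "n > 0" and wpos: "\<And>k. k < n \<Longrightarrow> w k > 0"
    and row: "\<And>k. k < n \<Longrightarrow> (\<Sum>l<n. A k l * w l) = c * w k"
  shows "eigenvalue (mat n n (\<lambda>(i,j). complex_of_real (A i j))) (complex_of_real c)"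
proof -
  let ?Q = "mat n n (\<lambda>(i,j). complex_of_real (A i j))"
  let ?v = "vec n (\<lambda>l. complex_of_real (w l))"
  have "?v \<noteq> 0\<^sub>v n"
  proof
    assume "?v = 0\<^sub>v n"
    hence "?v $ 0 = 0\<^sub>v n $ 0" by simp
    thus False using n wpos[OF n] by simp
  qed
  moreover have "?Q *\<^sub>v ?v = complex_of_real c \<cdot>\<^sub>v ?v"
  proof (rule eq_vecI)
    fix k assume "k < dim_vec (complex_of_real c \<cdot>\<^sub>v ?v)"
    hence k: "k < n" by simp
    have "(?Q *\<^sub>v ?v) $ k = (\<Sum>l<n. complex_of_real (A k l) * complex_of_real (w l))"
      using k by (auto simp: mult_mat_vec_def scalar_prod_def lessThan_atLeast0 intro!: sum.cong)
    also have "\<dots> = complex_of_real (\<Sum>l<n. A k l * w l)" by simp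
    also have "\<dots> = complex_of_real c * complex_of_real (w k)" using row[OF k] by simp
    finally show "(?Q *\<^sub>v ?v) $ k = (complex_of_real c \<cdot>\<^sub>v ?v) $ k" using k by simp
  qed simp
  ultimately show ?thesis unfolding eigenvalue_def eigenvector_def by (intro exI[of _ ?v]) auto
qed

lemma gdist_self: assumes "u < n" shows "gdist n E u u = 0"
proof -
  have "is_walk E n u u 0" unfolding is_walk_def using assms by (intro exI[of _ "\<lambda>_. u"]) auto
  hence "(LEAST k. is_walk E n u u k) = 0" by (simp add: Least_eq_0)
  thus ?thesis unfolding gdist_def by simp
qed

lemma gdist_pos: assumes c: "connected_graph n E" and u: "u < n" and v: "v < n" and uv: "u \<noteq> v"
  shows "gdist n E u v > 0"
proof -
  from c u v obtain k where "is_walk E n u v k" unfolding connected_graph_def by blast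
  hence w: "is_walk E n u v (LEAST k. is_walk E n u v k)" by (rule LeastI)
  have "(LEAST k. is_walk E n u v k) \<noteq> 0"
  proof
    assume "(LEAST k. is_walk E n u v k) = 0"
    with w have "is_walk E n u v 0" by simp
    thus False using uv unfolding is_walk_def by auto
  qed
  thus ?thesis unfolding gdist_def by simp
qed

lemma gdist_nonneg: "gdist n E u v \<ge> 0" unfolding gdist_def by simp

lemma transmission_pos: assumes c: "connected_graph n E" and n2: "n \<ge> 2" and u: "u < n"
  shows "transmission n E u > 0"
proof -
  obtain v where v: "v < n" "v \<noteq> u" using n2 u by (metis One_nat_def Suc_1 Suc_le_lessD lessI less_trans nat_neq_iff zero_less_Suc)
  have "gdist n E u v \<le> (\<Sum>j<n. gdist n E u j)"
    using v by (intro member_le_sum) (auto simp: gdist_nonneg)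
  moreover have "gdist n E u v > 0" using gdist_pos[OF c u v(1)] v by auto
  ultimately show ?thesis unfolding transmission_def by linarith
qed

lemma aux1: fixes x M N q :: real assumes "\<bar>x - M + N\<bar> < q" shows "0 < (x + M - N + q) / 2 - M + N"
proof -
  have "0 < x - M + N + q" using assms abs_less_iff[of "x - M + N" q] by linarith
  moreover have "2 * ((x + M - N + q) / 2) = x + M - N + q" by simp
  ultimately show ?thesis by linarith
qed
lemma aux2: fixes x M N q :: real assumes "\<bar>x - M + N\<bar> < q" shows "0 < (x + M - N + q) / 2 - x"
proof -
  have "0 < - (x - M + N) + q" using assms abs_less_iff[of "x - M + N" q] by linarith
  moreover have "(x + M - N + q) / 2 - x = (- (x - M + N) + q) / 2" by (simp add: field_simps)
  ultimately show ?thesis by simp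
qed

theorem theorem7:
  fixes n :: nat and E :: "nat \<Rightarrow> nat \<Rightarrow> bool" and \<alpha> :: real
    and s :: "nat \<Rightarrow> real" and M N :: real and i :: nat
  assumes conn: "connected_graph n E"
    and n2: "n \<ge> 2"
    and s_def: "\<And>k. s k = gen_avg_trans n E \<alpha> k + transmission n E k"
    and sorted: "\<And>k l. k \<le> l \<Longrightarrow> l < n \<Longrightarrow> s l \<le> s k"
    and M_def: "M = Max {transmission n E j | j. j < n}"
    and N_def: "N = Max {gdist n E a b * transmission n E b powr \<alpha> / transmission n E a powr \<alpha>
                        | a b. a < n \<and> b < n \<and> a \<noteq> b}"
    and i_lt: "i < n"
  shows "(spectral_radius (DQ_mat n E)
           \<le> (s i + M - N + sqrt ((s i - M + N)\<^sup>2 + 4 * N * (\<Sum>k<i. s k - s i))) / 2)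
         \<and> (spectral_radius (DQ_mat n E)
           = (s i + M - N + sqrt ((s i - M + N)\<^sup>2 + 4 * N * (\<Sum>k<i. s k - s i))) / 2
         \<longleftrightarrow> (\<forall>k<n. s k = s 0) \<or>
             (\<exists>t. 1 \<le> t \<and> t \<le> i \<and>
                  (\<forall>k<t. transmission n E k = M) \<and>
                  (\<forall>k<n. \<forall>l<t. k \<noteq> l \<longrightarrow>
                      gdist n E k l * transmission n E l powr \<alpha> / transmission n E k powr \<alpha> = N) \<and>
                  (\<forall>k. t \<le> k \<and> k < n \<longrightarrow> s k = s t)))"
proof -
  define D where "D k = transmission n E k" for k
  define P where "P k = D k powr \<alpha>" for k
  define d where "d = gdist n E"
  define A where "A k l = (if k = l then D k else 0) + d k l" for k l
  define B where "B k l = A k l * P l / P k" for k l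
  define Q where "Q = DQ_mat n E"
  define \<rho> where "\<rho> = spectral_radius Q"
  define S where "S = (\<Sum>k<i. s k - s i)"
  define bnd where "bnd = (s i + M - N + sqrt ((s i - M + N)\<^sup>2 + 4 * N * S)) / 2"
  define C1 where "C1 = (\<forall>k<n. s k = s 0)"
  define C2 where "C2 = (\<exists>t. 1 \<le> t \<and> t \<le> i \<and>
                  (\<forall>k<t. transmission n E k = M) \<and>
                  (\<forall>k<n. \<forall>l<t. k \<noteq> l \<longrightarrow>
                      gdist n E k l * transmission n E l powr \<alpha> / transmission n E k powr \<alpha> = N) \<and>
                  (\<forall>k. t \<le> k \<and> k < n \<longrightarrow> s k = s t))"
  have n0: "n > 0" using n2 by simp
  have Dpos: "D k > 0" if "k < n" for k using transmission_pos[OF conn n2 that] unfolding D_def .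
  have Ppos: "P k > 0" if "k < n" for k using Dpos[OF that] unfolding P_def by simp
  have dself: "d k k = 0" if "k < n" for k using gdist_self[OF that] unfolding d_def .
  have dpos: "d k l > 0" if "k < n" "l < n" "k \<noteq> l" for k l
    using gdist_pos[OF conn that] unfolding d_def .
  have dnn: "d k l \<ge> 0" for k l unfolding d_def by (rule gdist_nonneg)
  have Ann: "A k l \<ge> 0" if "k < n" "l < n" for k l
    using Dpos[OF that(1)] dnn[of k l] unfolding A_def by auto
  have Apos: "A k l > 0" if "k < n" "l < n" "k \<noteq> l" for k l
    using dpos[OF that] that(3) unfolding A_def by auto
  have Bkk: "B k k = D k" if "k < n" for k
    using dself[OF that] Ppos[OF that] unfolding B_def A_def by simp
  have Bkl: "B k l = d k l * P l / P k" if "k \<noteq> l" for k l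
    using that unfolding B_def A_def by simp
  have Bnn: "B k l \<ge> 0" if "k < n" "l < n" for k l
    using Ann[OF that] Ppos[OF that(1)] Ppos[OF that(2)] unfolding B_def by simp
  have rowB: "(\<Sum>l<n. B k l) = s k" if k: "k < n" for k
  proof -
    have "(\<Sum>l<n. B k l) = (\<Sum>l<n. (if k = l then D k else 0) + d k l * P l / P k)"
      using Ppos[OF k] unfolding B_def A_def by (intro sum.cong) (auto simp: field_simps)
    also have "\<dots> = D k + (\<Sum>l<n. d k l * P l) / P k"
      using k by (simp add: sum.distrib sum_divide_distrib)
    also have "\<dots> = s k" unfolding s_def gen_avg_trans_def D_def P_def d_def by simp
    finally show ?thesis .
  qed
  have Mfin: "finite {transmission n E j | j. j < n}" by simp
  have Mge: "D k \<le> M" if "k < n" for k unfolding M_def D_def using that Mfin by (intro Max_ge) auto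
  obtain jM where jM: "jM < n" "D jM = M"
  proof -
    have "{transmission n E j | j. j < n} \<noteq> {}" using n0 by auto
    from Max_in[OF Mfin this] show ?thesis using that unfolding M_def D_def by auto
  qed
  have Nfin: "finite {gdist n E a b * transmission n E b powr \<alpha> / transmission n E a powr \<alpha>
                        | a b. a < n \<and> b < n \<and> a \<noteq> b}"
  proof -
    have "{gdist n E a b * transmission n E b powr \<alpha> / transmission n E a powr \<alpha>
                        | a b. a < n \<and> b < n \<and> a \<noteq> b} \<subseteq>
          (\<lambda>(a,b). gdist n E a b * transmission n E b powr \<alpha> / transmission n E a powr \<alpha>) ` ({..<n} \<times> {..<n})"
      by auto
    thus ?thesis by (rule finite_subset) simp
  qed
  have Nge: "B k l \<le> N" if "k < n" "l < n" "k \<noteq> l" for k l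
    unfolding N_def Bkl[OF that(3)] d_def P_def D_def using that Nfin by (intro Max_ge) auto
  have Npos: "N > 0"
  proof -
    have "B 0 1 > 0" using Apos[of 0 1] Ppos[of 0] Ppos[of 1] n2 unfolding B_def by simp
    thus ?thesis using Nge[of 0 1] n2 by simp
  qed
  have Qc: "Q \<in> carrier_mat n n" unfolding Q_def DQ_mat_def by simp
  have Qeq: "Q = mat n n (\<lambda>(i,j). complex_of_real (A i j))"
    unfolding Q_def DQ_mat_def A_def D_def d_def by simp
  have bound_from: "\<rho> \<le> c \<and> (\<rho> = c \<longrightarrow> (\<forall>k<n. (\<Sum>l<n. B k l * x l) = c * x k))"
    if xpos: "\<And>k. k < n \<Longrightarrow> x k > 0" and xrow: "\<And>k. k < n \<Longrightarrow> (\<Sum>l<n. B k l * x l) \<le> c * x k" for x c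
  proof -
    have conv: "(\<Sum>l<n. A k l * (P l * x l)) = P k * (\<Sum>l<n. B k l * x l)" if k: "k < n" for k
      unfolding sum_distrib_left B_def using Ppos[OF k] by (intro sum.cong) (auto simp: field_simps)
    obtain \<mu> where mu: "\<mu> \<in> spectrum Q" "\<rho> = cmod \<mu>"
      using spectral_radius_mem_max(1)[OF Qc n0] unfolding \<rho>_def by auto
    have ev: "eigenvalue (mat n n (\<lambda>(i,j). complex_of_real (A i j))) \<mu>"
      using mu(1) unfolding spectrum_def Qeq by simp
    have r: "(\<Sum>l<n. A k l * (P l * x l)) \<le> c * (P k * x k)" if k: "k < n" for k
    proof -
      have "P k * (\<Sum>l<n. B k l * x l) \<le> P k * (c * x k)"
        using xrow[OF k] Ppos[OF k] by simp
      thus ?thesis unfolding conv[OF k] by (simp add: algebra_simps)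
    qed
    from eig_bound[of n A "\<lambda>l. P l * x l" c \<mu>, OF Ann Apos _ r ev] xpos Ppos
    have res: "cmod \<mu> \<le> c \<and> (cmod \<mu> = c \<longrightarrow> (\<forall>k<n. (\<Sum>l<n. A k l * (P l * x l)) = c * (P k * x k)))"
      by auto
    show ?thesis
    proof (intro conjI impI allI)
      show "\<rho> \<le> c" using res mu by simp
      fix k assume "\<rho> = c" "k < n"
      hence "(\<Sum>l<n. A k l * (P l * x l)) = c * (P k * x k)"
        using res mu by auto
      hence "P k * (\<Sum>l<n. B k l * x l) = P k * (c * x k)"
        unfolding conv[OF \<open>k < n\<close>] by (simp add: algebra_simps)
      thus "(\<Sum>l<n. B k l * x l) = c * x k" using Ppos[OF \<open>k < n\<close>] by simp
    qed
  qed
  have exact_from: "c \<le> \<rho>"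
    if xpos: "\<And>k. k < n \<Longrightarrow> x k > 0" and xrow: "\<And>k. k < n \<Longrightarrow> (\<Sum>l<n. B k l * x l) = c * x k" for x c
  proof -
    have conv: "(\<Sum>l<n. A k l * (P l * x l)) = P k * (\<Sum>l<n. B k l * x l)" if k: "k < n" for k
      unfolding sum_distrib_left B_def using Ppos[OF k] by (intro sum.cong) (auto simp: field_simps)
    have r: "(\<Sum>l<n. A k l * (P l * x l)) = c * (P k * x k)" if k: "k < n" for k
      unfolding conv[OF k] xrow[OF k] by simp
    have "eigenvalue Q (complex_of_real c)" unfolding Qeq
      by (rule eig_exact[OF n0 _ r]) (use xpos Ppos in auto)
    hence "cmod (complex_of_real c) \<in> cmod ` spectrum Q" unfolding spectrum_def by blast
    hence "cmod (complex_of_real c) \<le> \<rho>"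
      unfolding \<rho>_def by (rule spectral_radius_mem_max(2)[OF Qc n0])
    thus ?thesis by simp
  qed
  have s_ge: "s i \<le> s k" if "k \<le> i" for k using sorted[OF that i_lt] .
  have s_le: "s k \<le> s i" if "i \<le> k" "k < n" for k using sorted[OF that] .
  have Snn: "S \<ge> 0" unfolding S_def by (intro sum_nonneg) (use s_ge in auto)
  have goal: "\<rho> \<le> bnd \<and> (\<rho> = bnd \<longleftrightarrow> C1 \<or> C2)"
  proof -
  have C2_S0: "C1" if c2: "C2" and allS: "\<forall>k<i. s k = s i"
  proof -
    from c2 obtain t where t: "t \<le> i" "\<forall>k. t \<le> k \<and> k < n \<longrightarrow> s k = s t" unfolding C2_def by blast
    have sti: "s i = s t" using t(2)[rule_format, of i] t(1) i_lt by simp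
    have "s k = s i" if "k < n" for k
    proof (cases "t \<le> k")
      case True thus ?thesis using t(2)[rule_format, of k] that sti by simp
    next
      case False thus ?thesis using allS t(1) by simp
    qed
    thus ?thesis unfolding C1_def using n0 by auto
  qed
  show "\<rho> \<le> bnd \<and> (\<rho> = bnd \<longleftrightarrow> C1 \<or> C2)"
  proof (cases "S = 0")
    case True
    have allS: "\<forall>k<i. s k = s i"
    proof -
      have "\<forall>k\<in>{..<i}. s k - s i = 0"
        using True sum_nonneg_eq_0_iff[of "{..<i}" "\<lambda>k. s k - s i"] s_ge unfolding S_def by auto
      thus ?thesis by auto
    qed
    have s0i: "s 0 = s i" using allS by (cases "i = 0") auto
    have sq: "sqrt ((s i - M + N)\<^sup>2 + 4 * N * S) = \<bar>s i - M + N\<bar>" using True by simp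
    have bnd_ge: "s i \<le> bnd" unfolding bnd_def sq by (cases "s i - M + N \<ge> 0") (simp_all add: abs_if field_simps)
    have bf: "\<rho> \<le> s 0 \<and> (\<rho> = s 0 \<longrightarrow> (\<forall>k<n. (\<Sum>l<n. B k l * 1) = s 0 * 1))"
      by (rule bound_from) (use rowB sorted in auto)
    show ?thesis
    proof (intro conjI iffI)
      show "\<rho> \<le> bnd" using bf bnd_ge s0i by linarith
    next
      assume "\<rho> = bnd"
      hence "\<rho> = s 0" using bf bnd_ge s0i by linarith
      have "\<forall>k<n. s k = s 0"
      proof (intro allI impI)
        fix k assume k: "k < n"
        have "(\<Sum>l<n. B k l * 1) = s 0 * 1" using spec[OF mp[OF conjunct2[OF bf] \<open>\<rho> = s 0\<close>], of k] k by simp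
        thus "s k = s 0" using rowB[OF k] by simp
      qed
      thus "C1 \<or> C2" unfolding C1_def by blast
    next
      assume "C1 \<or> C2"
      hence c1: "\<forall>k<n. s k = s 0" using C2_S0 allS unfolding C1_def by blast
      have rB1: "(\<Sum>l<n. B k l * 1) = s 0 * 1" if k: "k < n" for k
      proof -
        have "s k = s 0" using c1 k by blast
        thus ?thesis using rowB[OF k] by simp
      qed
      have "s 0 \<le> \<rho>" by (rule exact_from[of "\<lambda>_. 1"]) (use rB1 in auto)
      hence rho: "\<rho> = s 0" using bf by linarith
      have "B jM jM \<le> (\<Sum>l<n. B jM l)" using jM Bnn by (intro member_le_sum) auto
      hence "M \<le> s jM" using rowB[OF jM(1)] Bkk[OF jM(1)] jM by simp
      moreover have "s jM = s 0" using c1 jM(1) by blast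
      ultimately have "M \<le> s i" using s0i by linarith
      hence "bnd = s i" unfolding bnd_def sq using Npos by simp
      thus "\<rho> = bnd" using rho s0i by simp
    qed
  next
    case False
    hence Spos: "S > 0" using Snn by simp
    define a where "a = s i - M + N"
    define q where "q = sqrt ((s i - M + N)\<^sup>2 + 4 * N * S)"
    have NS: "N * S > 0" using Npos Spos by simp
    have q2: "q\<^sup>2 = a\<^sup>2 + 4 * N * S" unfolding q_def a_def using NS
      by (simp add: add_nonneg_nonneg)
    have "sqrt (a\<^sup>2) < q" unfolding q_def a_def using NS by (intro real_sqrt_less_mono) simp
    hence qgt: "\<bar>a\<bar> < q" by simp
    have bndq: "bnd = (s i + M - N + q) / 2" unfolding bnd_def q_def S_def by simp
    define \<delta> where "\<delta> = bnd - M + N"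
    have dpos: "\<delta> > 0" unfolding \<delta>_def bndq using aux1 qgt unfolding a_def by blast
    have bsi: "bnd - s i > 0" unfolding bndq using aux2 qgt unfolding a_def by blast
    have keyq: "(bnd - s i) * \<delta> = (q\<^sup>2 - a\<^sup>2) / 4" unfolding \<delta>_def bndq a_def
      by (simp add: field_simps power2_eq_square)
    have key: "(bnd - s i) * \<delta> = N * S" unfolding keyq q2 by simp
    define e where "e l = (if l < i then (s l - s i) / \<delta> else 0)" for l
    have enn: "e l \<ge> 0" for l unfolding e_def using s_ge dpos by auto
    have Esum: "(\<Sum>l<n. e l) = S / \<delta>"
    proof -
      have "(\<Sum>l<n. e l) = (\<Sum>l<i. e l)"
        using i_lt by (intro sum.mono_neutral_right) (auto simp: e_def)
      also have "\<dots> = (\<Sum>l<i. (s l - s i) / \<delta>)" unfolding e_def by simp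
      also have "\<dots> = S / \<delta>" unfolding S_def by (simp add: sum_divide_distrib)
      finally show ?thesis .
    qed
    have NE: "N * (S / \<delta>) = bnd - s i" using key dpos by (simp add: field_simps)
    have ediff: "s k - s i \<le> \<delta> * e k" if "k < n" for k
      using that s_le dpos unfolding e_def by auto
    have ediff_eq: "s k - s i = \<delta> * e k" if "k < i" for k
      using that dpos unfolding e_def by auto
    define T where "T k = (\<Sum>l<n. B k l * e l)" for k
    define g where "g k l = N * e l + (if l = k then (M - N) * e k else 0)" for k l
    have gsum: "(\<Sum>l<n. g k l) = N * (S / \<delta>) + (M - N) * e k" if k: "k < n" for k
      unfolding g_def sum.distrib sum_distrib_left[symmetric] Esum using k by simp
    have gterm: "B k l * e l \<le> g k l" if "k < n" "l < n" for k l
    proof (cases "l = k")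
      case True
      have "D k * e k \<le> M * e k" using Mge[OF that(1)] enn by (simp add: mult_right_mono)
      thus ?thesis using True Bkk[OF that(1)] unfolding g_def by (simp add: algebra_simps)
    next
      case False
      have "B k l * e l \<le> N * e l" using Nge[OF that] False enn by (simp add: mult_right_mono)
      thus ?thesis using False unfolding g_def by simp
    qed
    have Tle: "T k \<le> N * (S / \<delta>) + (M - N) * e k" if k: "k < n" for k
      unfolding T_def gsum[OF k, symmetric] by (rule sum_mono) (use gterm k in auto)
    have rowsum: "(\<Sum>l<n. B k l * (1 + e l)) = s k + T k" if k: "k < n" for k
      unfolding T_def rowB[OF k, symmetric] by (simp add: algebra_simps sum.distrib)
    have bsplit: "\<delta> * e k + (M - N) * e k = bnd * e k" for k unfolding \<delta>_def by (simp add: algebra_simps)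
    have bf: "\<rho> \<le> bnd \<and> (\<rho> = bnd \<longrightarrow> (\<forall>k<n. (\<Sum>l<n. B k l * (1 + e l)) = bnd * (1 + e k)))"
    proof (rule bound_from)
      fix k assume k: "k < n"
      show "1 + e k > 0" using enn[of k] by simp
      have "s k + T k \<le> bnd * (1 + e k)"
        using ediff[OF k] Tle[OF k] NE bsplit[of k] by (simp add: algebra_simps)
      thus "(\<Sum>l<n. B k l * (1 + e l)) \<le> bnd * (1 + e k)" using rowsum[OF k] by simp
    qed
    have sti_help: "s t = s i" if "t \<le> i" "\<forall>k. t \<le> k \<and> k < n \<longrightarrow> s k = s t" for t
      using that(2)[rule_format, of i] that(1) i_lt by simp
    show ?thesis
    proof (intro conjI iffI)
      show "\<rho> \<le> bnd" using bf by simp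
    next
      assume eq: "\<rho> = bnd"
      have rows: "s k + T k = bnd * (1 + e k)" if k: "k < n" for k
        using bf eq rowsum[OF k] k by auto
      have sk_eq: "s k - s i = \<delta> * e k" and T_eq: "T k = N * (S / \<delta>) + (M - N) * e k"
        if k: "k < n" for k
        using rows[OF k] ediff[OF k] Tle[OF k] NE bsplit[of k] by (simp_all add: algebra_simps)
      have termeq: "B k l * e l = g k l" if k: "k < n" and l: "l < n" for k l
      proof -
        have "(\<Sum>l<n. g k l - B k l * e l) = 0"
          using T_eq[OF k] gsum[OF k] unfolding T_def by (simp add: sum_subtractf)
        moreover have "\<forall>j\<in>{..<n}. g k j - B k j * e j \<ge> 0" using gterm k by auto
        ultimately have "g k l - B k l * e l = 0"
          using sum_nonneg_eq_0_iff[of "{..<n}" "\<lambda>j. g k j - B k j * e j"] l by auto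
        thus ?thesis by simp
      qed
      define t where "t = (LEAST l. s l = s i)"
      have t_le: "t \<le> i" unfolding t_def by (rule Least_le) simp
      have st: "s t = s i" unfolding t_def by (rule LeastI[of _ i]) simp
      have ltt: "s l \<noteq> s i" if "l < t" for l using not_less_Least[OF that[unfolded t_def]] by simp
      have t1: "1 \<le> t"
      proof (rule ccontr)
        assume "\<not> 1 \<le> t"
        hence "t = 0" by simp
        hence "s 0 = s i" using st by simp
        hence "\<forall>k<i. s k = s i" using s_ge sorted[of 0] i_lt by (metis le0 order_antisym less_imp_le order_less_trans)
        hence "S = 0" unfolding S_def by simp
        thus False using Spos by simp
      qed
      have epos: "e l > 0" if "l < t" for l
      proof -
        have "l < i" using that t_le by simp
        moreover have "s l > s i" using s_ge[of l] ltt[OF that] \<open>l < i\<close> by simp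
        ultimately show ?thesis unfolding e_def using dpos by simp
      qed
      have "C2" unfolding C2_def
      proof (intro exI[of _ t] conjI allI impI t1 t_le)
        fix k assume k: "k < t"
        have kn: "k < n" using k t_le i_lt by simp
        have "B k k * e k = M * e k" using termeq[OF kn kn] unfolding g_def by (simp add: algebra_simps)
        hence "B k k = M" using epos[OF k] by simp
        thus "transmission n E k = M" using Bkk[OF kn] unfolding D_def by simp
      next
        fix k l assume k: "k < n" and l: "l < t" and kl: "k \<noteq> l"
        have ln: "l < n" using l t_le i_lt by simp
        have "B k l * e l = N * e l" using termeq[OF k ln] kl unfolding g_def by simp
        hence "B k l = N" using epos[OF l] by simp
        thus "gdist n E k l * transmission n E l powr \<alpha> / transmission n E k powr \<alpha> = N"
          using Bkl[OF kl] unfolding d_def P_def D_def by simp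
      next
        fix k assume k: "t \<le> k \<and> k < n"
        show "s k = s t"
        proof (cases "k \<le> i")
          case True
          thus ?thesis using s_ge[OF True] sorted[of t k] k st by fastforce
        next
          case False
          hence "e k = 0" unfolding e_def by simp
          thus ?thesis using sk_eq[of k] k st by simp
        qed
      qed
      thus "C1 \<or> C2" by simp
    next
      assume c: "C1 \<or> C2"
      have "\<not> C1"
      proof
        assume "C1"
        hence "\<forall>k<i. s k = s i" using i_lt unfolding C1_def by (metis less_trans)
        hence "S = 0" unfolding S_def by simp
        thus False using Spos by simp
      qed
      with c have "C2" by simp
      then obtain t where t: "t \<le> i" "\<forall>k<t. transmission n E k = M"
        "\<forall>k<n. \<forall>l<t. k \<noteq> l \<longrightarrow>
                      gdist n E k l * transmission n E l powr \<alpha> / transmission n E k powr \<alpha> = N"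
        "\<forall>k. t \<le> k \<and> k < n \<longrightarrow> s k = s t" unfolding C2_def by blast
      have sti: "s t = s i" using sti_help t by blast
      have sk_eq: "s k - s i = \<delta> * e k" if k: "k < n" for k
      proof (cases "k < i")
        case True thus ?thesis by (rule ediff_eq)
      next
        case False
        have "t \<le> k \<and> k < n" using t(1) False k by linarith
        hence skt: "s k = s t" using t(4) by blast
        have ek: "e k = 0" unfolding e_def using False by simp
        show ?thesis using skt sti ek by simp
      qed
      have termeq: "B k l * e l = g k l" if k: "k < n" and l: "l < n" for k l
      proof (cases "e l = 0")
        case True thus ?thesis unfolding g_def by auto
      next
        case False
        hence li: "l < i" and sl: "s l \<noteq> s i" unfolding e_def by (auto split: if_splits)
        have lt: "l < t"
        proof (rule ccontr)
          assume "\<not> l < t"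
          hence "t \<le> l \<and> l < n" using l by linarith
          hence "s l = s t" using t(4) by blast
          thus False using sl sti by simp
        qed
        show ?thesis
        proof (cases "l = k")
          case True
          have "B k k = M" using Bkk[OF k] t(2) lt True unfolding D_def by simp
          thus ?thesis using True unfolding g_def by (simp add: algebra_simps)
        next
          case lk: False
          have "B k l = N" using Bkl[of k l] t(3) k lt lk unfolding d_def P_def D_def by auto
          thus ?thesis using lk unfolding g_def by simp
        qed
      qed
      have "bnd \<le> \<rho>"
      proof (rule exact_from)
        fix k assume k: "k < n"
        show "1 + e k > 0" using enn[of k] by simp
        have "T k = (\<Sum>l<n. g k l)" unfolding T_def using termeq k by (intro sum.cong) auto
        hence "T k = N * (S / \<delta>) + (M - N) * e k" using gsum[OF k] by simp
        hence "s k + T k = bnd * (1 + e k)"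
          using sk_eq[OF k] NE bsplit[of k] by (simp add: algebra_simps)
        thus "(\<Sum>l<n. B k l * (1 + e l)) = bnd * (1 + e k)" using rowsum[OF k] by simp
      qed
      thus "\<rho> = bnd" using bf by simp
    qed
  qed
  qed
  thus ?thesis unfolding \<rho>_def Q_def bnd_def S_def C1_def C2_def .
qed

end
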